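(* Let $k\ge 2$ and $n\ge 2k$ be integers. The Kneser graph $\mathrm{KG}(n,k)$ satisfies $\alpha_{\mathrm{od}}(\mathrm{KG}(n,k))=\alpha(\mathrm{KG}(n,k))$ if and only if $\binom{n-k-1}{k-1}$ is odd. Equivalently, $\alpha_{\mathrm{od}}(\mathrm{KG}(n,k))=\alpha(\mathrm{KG}(n,k))$ if and only if $\binom{n-1}{k-1}\not\equiv \sum_{t=1}^{k}\binom{k}{t}\binom{n-k-1}{k-1-t} \pmod 2$.
   Context: The Kneser graph $\mathrm{KG}(n,k)$ has as vertices the $k$-element subsets of an $n$-element set, two being adjacent iff they are disjoint. An odd independent set in a graph $G=(V,E)$ is an independent set $S$ such that every $v\in V\setminus S$ has either no neighbor or an odd number of neighbors in $S$. $\alpha_{\mathrm{od}}(G)$ is the maximum size of an odd independent set; $\alpha(G)$ is the independence number. *)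

theory Defs
  imports Main
begin

definition indep_set :: "'a set \<Rightarrow> ('a \<Rightarrow> 'a \<Rightarrow> bool) \<Rightarrow> 'a set \<Rightarrow> bool" where
  "indep_set V E S \<longleftrightarrow> S \<subseteq> V \<and> (\<forall>x\<in>S. \<forall>y\<in>S. \<not> E x y)"

definition odd_indep_set :: "'a set \<Rightarrow> ('a \<Rightarrow> 'a \<Rightarrow> bool) \<Rightarrow> 'a set \<Rightarrow> bool" where
  "odd_indep_set V E S \<longleftrightarrow> indep_set V E S \<and>
     (\<forall>v\<in>V - S. card {u\<in>S. E v u} = 0 \<or> odd (card {u\<in>S. E v u}))"

definition alpha :: "'a set \<Rightarrow> ('a \<Rightarrow> 'a \<Rightarrow> bool) \<Rightarrow> nat" where
  "alpha V E = Max (card ` {S. indep_set V E S})"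

definition alpha_od :: "'a set \<Rightarrow> ('a \<Rightarrow> 'a \<Rightarrow> bool) \<Rightarrow> nat" where
  "alpha_od V E = Max (card ` {S. odd_indep_set V E S})"

definition kneser_vertices :: "nat \<Rightarrow> nat \<Rightarrow> nat set set" where
  "kneser_vertices n k = {A. A \<subseteq> {..<n} \<and> card A = k}"

definition kneser_adj :: "nat set \<Rightarrow> nat set \<Rightarrow> bool" where
  "kneser_adj A B \<longleftrightarrow> A \<inter> B = {}"

end

theory Submission
  imports Defs "HOL-Combinatorics.Permutations"
begin

definition wrap :: "nat \<Rightarrow> nat \<Rightarrow> nat" where
  "wrap n a = (if a < n then a else a - n)"

definition pos :: "nat \<Rightarrow> nat \<Rightarrow> nat \<Rightarrow> nat set" where
  "pos n k s = (\<lambda>i. wrap n (s + i)) ` {..<k}"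

definition fdist :: "nat \<Rightarrow> nat \<Rightarrow> nat \<Rightarrow> nat" where
  "fdist n s t = (if s \<le> t then t - s else t + n - s)"

definition arc :: "nat \<Rightarrow> nat \<Rightarrow> (nat \<Rightarrow> nat) \<Rightarrow> nat \<Rightarrow> nat set" where
  "arc n k p s = p ` pos n k s"

definition starts :: "nat \<Rightarrow> nat \<Rightarrow> nat set set \<Rightarrow> (nat \<Rightarrow> nat) \<Rightarrow> nat set" where
  "starts n k F p = {s. s < n \<and> arc n k p s \<in> F}"

definition intersecting :: "nat set set \<Rightarrow> bool" where
  "intersecting F \<longleftrightarrow> (\<forall>A\<in>F. \<forall>B\<in>F. A \<inter> B \<noteq> {})"

lemma pos_eq:
  assumes "s < n" "k \<le> n"
  shows "pos n k s = (if s + k \<le> n then {s..<s+k} else {s..<n} \<union> {..<s+k-n})"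
proof (cases "s + k \<le> n")
  case True
  have "pos n k s = {s..<s+k}"
  proof
    show "pos n k s \<subseteq> {s..<s+k}" using True by (auto simp: pos_def wrap_def)
    show "{s..<s+k} \<subseteq> pos n k s"
    proof
      fix j assume j: "j \<in> {s..<s+k}"
      have "j = wrap n (s + (j - s))" using j True by (auto simp: wrap_def)
      moreover have "j - s \<in> {..<k}" using j by auto
      ultimately show "j \<in> pos n k s" unfolding pos_def by blast
    qed
  qed
  then show ?thesis using True by simp
next
  case False
  have "pos n k s = {s..<n} \<union> {..<s+k-n}"
  proof
    show "pos n k s \<subseteq> {s..<n} \<union> {..<s+k-n}" using False assms by (auto simp: pos_def wrap_def)
    show "{s..<n} \<union> {..<s+k-n} \<subseteq> pos n k s"
    proof
      fix j assume j: "j \<in> {s..<n} \<union> {..<s+k-n}"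
      show "j \<in> pos n k s"
      proof (cases "j \<ge> s")
        case True
        have "j = wrap n (s + (j - s))" using j True assms by (auto simp: wrap_def)
        moreover have "j - s \<in> {..<k}" using j True False by auto
        ultimately show ?thesis unfolding pos_def by blast
      next
        case c: False
        have "j = wrap n (s + (j + n - s))" using j c assms by (auto simp: wrap_def)
        moreover have "j + n - s \<in> {..<k}" using j c False assms by auto
        ultimately show ?thesis unfolding pos_def by blast
      qed
    qed
  qed
  then show ?thesis using False by simp
qed

lemma pos_sub: "s < n \<Longrightarrow> k \<le> n \<Longrightarrow> pos n k s \<subseteq> {..<n}"
  by (auto simp: pos_def wrap_def)

lemma pos_inj: "s < n \<Longrightarrow> k \<le> n \<Longrightarrow> inj_on (\<lambda>i. wrap n (s + i)) {..<k}"
  by (auto simp: inj_on_def wrap_def split: if_splits)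

lemma card_pos: "s < n \<Longrightarrow> k \<le> n \<Longrightarrow> card (pos n k s) = k"
  unfolding pos_def by (simp add: card_image pos_inj)

lemma pos_disj:
  assumes "s < n" "t < n" "k \<le> fdist n s t" "fdist n s t \<le> n - k"
  shows "pos n k s \<inter> pos n k t = {}"
  using assms by (auto simp: pos_def wrap_def fdist_def split: if_splits)

lemma one_cycle:
  assumes S: "S \<subseteq> {..<n}" and nk: "2 * k \<le> n" and k: "k \<ge> 1"
    and pw: "\<And>s t. s \<in> S \<Longrightarrow> t \<in> S \<Longrightarrow> \<not> (k \<le> fdist n s t \<and> fdist n s t \<le> n - k)"
  shows "card S \<le> k \<and> (\<forall>a\<in>S. card S = k \<longrightarrow> (\<forall>i<k. wrap n (a + i) \<in> S \<or> wrap n (a + i + n - k) \<in> S))"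
proof (cases "S = {}")
  case True then show ?thesis by simp
next
  case False
  then obtain a where a: "a \<in> S" by blast
  have fin: "finite S" using S finite_subset by blast
  have main: "card S \<le> k \<and> (card S = k \<longrightarrow> (\<forall>i<k. wrap n (a + i) \<in> S \<or> wrap n (a + i + n - k) \<in> S))"
    if a: "a \<in> S" for a
  proof -
    define h where "h s = (if fdist n a s < k then fdist n a s else fdist n a s - (n - k))" for s
    have an: "a < n" using a S by auto
    have hk: "h s < k" if "s \<in> S" for s
    proof -
      have "s < n" using that S by auto
      then have "fdist n a s < n" using an by (auto simp: fdist_def)
      moreover have "\<not> (k \<le> fdist n a s \<and> fdist n a s \<le> n - k)" using pw[OF a that] .
      ultimately show ?thesis unfolding h_def by auto
    qed
    have inj: "inj_on h S"
    proof (rule inj_onI)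
      fix s s' assume s: "s \<in> S" and s': "s' \<in> S" and e: "h s = h s'"
      have sn: "s < n" "s' < n" using s s' S by auto
      note p1 = pw[OF a s] and p2 = pw[OF a s'] and p3 = pw[OF s s'] and p4 = pw[OF s' s]
      show "s = s'"
        using e sn an p1 p2 p3 p4 nk unfolding h_def fdist_def by (auto split: if_splits)
    qed
    have cS: "card (h ` S) = card S" using inj by (simp add: card_image)
    have sub: "h ` S \<subseteq> {..<k}" using hk by auto
    have le: "card S \<le> k" using card_mono[OF _ sub] cS by simp
    moreover have "(\<forall>i<k. wrap n (a + i) \<in> S \<or> wrap n (a + i + n - k) \<in> S)" if ck: "card S = k"
    proof (intro allI impI)
      fix i assume i: "i < k"
      have "h ` S = {..<k}" using card_subset_eq[OF _ sub] cS ck by simp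
      then obtain s where s: "s \<in> S" "h s = i" using i by (metis imageE lessThan_iff)
      have sn: "s < n" using s S by auto
      show "wrap n (a + i) \<in> S \<or> wrap n (a + i + n - k) \<in> S"
      proof (cases "fdist n a s < k")
        case True
        then have "s = wrap n (a + i)" using s sn an unfolding h_def fdist_def wrap_def by (auto split: if_splits)
        then show ?thesis using s by simp
      next
        case False
        then have "s = wrap n (a + i + n - k)" using s sn an i nk pw[OF a s(1)] unfolding h_def fdist_def wrap_def by (auto split: if_splits)
        then show ?thesis using s by simp
      qed
    qed
    ultimately show ?thesis by blast
  qed
  show ?thesis using main a by blast
qed

lemma perm_extend:
  assumes U: "finite U" and PU: "P \<subseteq> U" and TU: "T \<subseteq> U" and f: "bij_betw f P T"
  shows "\<exists>q. q permutes U \<and> (\<forall>i\<in>P. q i = f i)"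
proof -
  have "card P = card T" using bij_betw_same_card[OF f] .
  then have "card (U - P) = card (U - T)"
    using PU TU U by (simp add: card_Diff_subset finite_subset)
  then obtain g where g: "bij_betw g (U - P) (U - T)"
    using finite_same_card_bij U by (meson finite_Diff)
  define q where "q i = (if i \<in> P then f i else if i \<in> U then g i else i)" for i
  have b1: "bij_betw q P T" using f by (rule bij_betw_cong[THEN iffD1, rotated]) (simp add: q_def)
  have b2: "bij_betw q (U - P) (U - T)" using g by (rule bij_betw_cong[THEN iffD1, rotated]) (simp add: q_def)
  have "bij_betw q (P \<union> (U - P)) (T \<union> (U - T))"
    by (rule bij_betw_combine[OF b1 b2]) auto
  moreover have "P \<union> (U - P) = U" "T \<union> (U - T) = U" using PU TU by auto
  ultimately have "bij_betw q U U" by simp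
  then have "q permutes U" by (rule bij_imp_permutes) (use PU in \<open>auto simp: q_def\<close>)
  then show ?thesis by (auto simp: q_def)
qed

lemma perm_map_set:
  assumes U: "finite U" and "A \<subseteq> U" "B \<subseteq> U" "card A = card B"
  shows "\<exists>t. t permutes U \<and> t ` A = B"
proof -
  obtain f where f: "bij_betw f A B" using finite_same_card_bij assms finite_subset by metis
  obtain t where t: "t permutes U" "\<forall>i\<in>A. t i = f i" using perm_extend[OF U assms(2,3) f] by blast
  have "t ` A = f ` A" using t(2) by auto
  also have "\<dots> = B" using f by (simp add: bij_betw_def)
  finally show ?thesis using t(1) by blast
qed

definition Nc :: "nat \<Rightarrow> nat \<Rightarrow> nat set \<Rightarrow> nat" where
  "Nc n k A = (\<Sum>p\<in>{p. p permutes {..<n}}. \<Sum>s<n. if arc n k p s = A then 1 else 0)"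

lemma Nc_eq:
  assumes "A \<subseteq> {..<n}" "B \<subseteq> {..<n}" "card A = card B"
  shows "Nc n k A = Nc n k B"
proof -
  obtain t where t: "t permutes {..<n}" "t ` A = B" using perm_map_set[of "{..<n}" A B] assms by auto
  let ?P = "{p. p permutes {..<n}}"
  have bij: "bij_betw (\<lambda>p. t \<circ> p) ?P ?P"
  proof (rule bij_betw_byWitness[where f'="\<lambda>p. inv t \<circ> p"])
    show "\<forall>a\<in>?P. inv t \<circ> (t \<circ> a) = a" using permutes_inv_o(2)[OF t(1)] by (simp add: o_assoc)
    show "\<forall>a\<in>?P. t \<circ> (inv t \<circ> a) = a" using permutes_inv_o(1)[OF t(1)] by (simp add: o_assoc)
    show "(\<lambda>p. t \<circ> p) ` ?P \<subseteq> ?P" using t(1) by (auto intro: permutes_compose)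
    show "(\<lambda>p. inv t \<circ> p) ` ?P \<subseteq> ?P" using permutes_inv[OF t(1)] by (auto intro: permutes_compose)
  qed
  have injt: "inj t" using t(1) by (rule permutes_inj)
  have "Nc n k B = (\<Sum>p\<in>?P. \<Sum>s<n. if arc n k (t \<circ> p) s = B then 1 else 0)"
    unfolding Nc_def by (rule sum.reindex_bij_betw[OF bij, of "\<lambda>p. \<Sum>s<n. if arc n k p s = B then 1 else 0", symmetric])
  also have "\<dots> = Nc n k A"
  proof -
    have key: "((t \<circ> p) ` X = B) = (p ` X = A)" for p X
      using inj_image_eq_iff[OF injt] t(2) by (metis image_comp)
    show ?thesis unfolding Nc_def arc_def key ..
  qed
  finally show ?thesis by simp
qed

lemma sum_starts:
  assumes "finite F"
  shows "(\<Sum>p\<in>{p. p permutes {..<n}}. card (starts n k F p)) = (\<Sum>A\<in>F. Nc n k A)"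
proof -
  have "card (starts n k F p) = (\<Sum>s<n. \<Sum>A\<in>F. if arc n k p s = A then 1 else 0)" for p
  proof -
    have "starts n k F p = {s\<in>{..<n}. arc n k p s \<in> F}" by (auto simp: starts_def)
    then have "card (starts n k F p) = (\<Sum>s<n. if arc n k p s \<in> F then 1 else 0)"
      by (simp add: sum.inter_filter[symmetric])
    also have "\<dots> = (\<Sum>s<n. \<Sum>A\<in>F. if arc n k p s = A then 1 else 0)"
      using assms by simp
    finally show ?thesis .
  qed
  then have "(\<Sum>p\<in>{p. p permutes {..<n}}. card (starts n k F p)) =
     (\<Sum>p\<in>{p. p permutes {..<n}}. \<Sum>s<n. \<Sum>A\<in>F. if arc n k p s = A then 1 else 0)" by simp
  also have "\<dots> = (\<Sum>p\<in>{p. p permutes {..<n}}. \<Sum>A\<in>F. \<Sum>s<n. if arc n k p s = A then 1 else 0)"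
    by (intro sum.cong refl sum.swap)
  also have "\<dots> = (\<Sum>A\<in>F. \<Sum>p\<in>{p. p permutes {..<n}}. \<Sum>s<n. if arc n k p s = A then 1 else 0)"
    by (rule sum.swap)
  finally show ?thesis by (simp add: Nc_def)
qed

lemma arc_K:
  assumes "p permutes {..<n}" "s < n" "k \<le> n"
  shows "arc n k p s \<in> kneser_vertices n k"
proof -
  have "inj p" using assms(1) by (rule permutes_inj)
  then have "card (arc n k p s) = k" unfolding arc_def
    by (simp add: card_image inj_on_subset card_pos assms)
  moreover have "arc n k p s \<subseteq> {..<n}" unfolding arc_def
    using pos_sub[OF assms(2,3)] permutes_in_image[OF assms(1)] by auto
  ultimately show ?thesis by (simp add: kneser_vertices_def)
qed

lemma starts_pw:
  assumes p: "p permutes {..<n}" and F: "intersecting F"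
    and s: "s \<in> starts n k F p" and t: "t \<in> starts n k F p"
  shows "\<not> (k \<le> fdist n s t \<and> fdist n s t \<le> n - k)"
proof
  assume h: "k \<le> fdist n s t \<and> fdist n s t \<le> n - k"
  have sn: "s < n" "t < n" using s t by (auto simp: starts_def)
  have "pos n k s \<inter> pos n k t = {}" using pos_disj[OF sn] h by auto
  moreover have "inj p" using p by (rule permutes_inj)
  ultimately have "arc n k p s \<inter> arc n k p t = {}" unfolding arc_def
    by (simp add: image_Int[symmetric])
  moreover have "arc n k p s \<in> F" "arc n k p t \<in> F" using s t by (auto simp: starts_def)
  ultimately show False using F by (auto simp: intersecting_def)
qed

lemma card_starts_le:
  assumes p: "p permutes {..<n}" and F: "intersecting F" and "2 * k \<le> n" "k \<ge> 1"
  shows "card (starts n k F p) \<le> k"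
  using one_cycle[of "starts n k F p" n k] starts_pw[OF p F] assms by (auto simp: starts_def)

lemma card_kv: "card (kneser_vertices n k) = n choose k"
  unfolding kneser_vertices_def using n_subsets[of "{..<n}" k] by simp

lemma finite_kv: "finite (kneser_vertices n k)"
  unfolding kneser_vertices_def by (rule finite_subset[of _ "Pow {..<n}"]) auto

lemma binom_id: "k \<ge> 1 \<Longrightarrow> n \<ge> 1 \<Longrightarrow> k * (n choose k) = n * ((n - 1) choose (k - 1))"
  using Suc_times_binomial[of "k - 1" "n - 1"] by simp

lemma ekr:
  assumes k: "k \<ge> 1" and nk: "2 * k \<le> n" and FK: "F \<subseteq> kneser_vertices n k" and F: "intersecting F"
  shows "card F \<le> (n - 1) choose (k - 1) \<and>
    (card F = (n - 1) choose (k - 1) \<longrightarrow> (\<forall>p. p permutes {..<n} \<longrightarrow> card (starts n k F p) = k))"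
proof -
  define P where "P = {p. p permutes {..<n}}"
  define K where "K = kneser_vertices n k"
  define N0 where "N0 = Nc n k {..<k}"
  have finK: "finite K" unfolding K_def by (rule finite_kv)
  have finF: "finite F" using FK finite_kv finite_subset by blast
  have finP: "finite P" unfolding P_def by (rule finite_permutations) simp
  have cP: "card P > 0" using finP unfolding P_def
    by (metis (mono_tags) card_gt_0_iff empty_iff mem_Collect_eq permutes_id)
  have n1: "n \<ge> 1" using k nk by simp
  have NcK: "Nc n k A = N0" if "A \<in> K" for A
    unfolding N0_def using that k nk by (intro Nc_eq) (auto simp: K_def kneser_vertices_def)
  have hK: "(\<Sum>p\<in>P. card (starts n k K p)) = n * card P"
  proof -
    have "starts n k K p = {..<n}" if "p \<in> P" for p
      using arc_K[of p n _ k] that nk unfolding P_def K_def starts_def by auto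
    then show ?thesis by simp
  qed
  moreover have "(\<Sum>p\<in>P. card (starts n k K p)) = card K * N0"
    unfolding P_def using sum_starts[OF finK, of n k] NcK by simp
  ultimately have eqK: "card K * N0 = n * card P" by simp
  have hF: "(\<Sum>p\<in>P. card (starts n k F p)) = card F * N0"
    unfolding P_def using sum_starts[OF finF, of n k] NcK FK K_def by (simp add: subset_iff)
  have hle: "(\<Sum>p\<in>P. card (starts n k F p)) \<le> (\<Sum>p\<in>P. k)"
    by (rule sum_mono) (use card_starts_le[OF _ F nk k] in \<open>auto simp: P_def\<close>)
  have cK: "k * card K = n * ((n - 1) choose (k - 1))"
    unfolding K_def card_kv using binom_id[OF k n1] .
  have N0pos: "N0 > 0" using eqK cP n1 by (metis gr0I mult_is_0 not_one_le_zero)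
  have A: "card F * N0 \<le> k * card P" using hF hle by (simp add: mult.commute)
  then have "n * (card F * N0) \<le> n * (k * card P)" by simp
  also have "\<dots> = k * (card K * N0)" using eqK by simp
  also have "\<dots> = (n * ((n - 1) choose (k - 1))) * N0" using cK by (simp add: mult.assoc)
  finally have B: "(card F) * (n * N0) \<le> ((n - 1) choose (k - 1)) * (n * N0)"
    by (simp add: ac_simps)
  have le: "card F \<le> (n - 1) choose (k - 1)" using B N0pos n1 by simp
  moreover have "\<forall>p. p permutes {..<n} \<longrightarrow> card (starts n k F p) = k"
    if eq: "card F = (n - 1) choose (k - 1)"
  proof (intro allI impI)
    fix p assume p: "p permutes {..<n}"
    have "n * (card F * N0) = n * (k * card P)"
      using eqK cK eq by (metis mult.assoc mult.commute)
    then have "card F * N0 = k * card P" using n1 by simp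
    then have "(\<Sum>p\<in>P. card (starts n k F p)) = (\<Sum>p\<in>P. k)" using hF by simp
    from sum_mono_inv[OF this] show "card (starts n k F p) = k"
      using card_starts_le[OF _ F nk k] p finP by (auto simp: P_def)
  qed
  ultimately show ?thesis by blast
qed

lemma starts_choice:
  assumes p: "p permutes {..<n}" and F: "intersecting F" and nk: "2 * k \<le> n" and k: "k \<ge> 1"
    and c: "card (starts n k F p) = k" and a: "a \<in> starts n k F p" and i: "i < k"
  shows "wrap n (a + i) \<in> starts n k F p \<or> wrap n (a + i + n - k) \<in> starts n k F p"
  using one_cycle[of "starts n k F p" n k] starts_pw[OF p F] assms by (auto simp: starts_def)

lemma lemA:
  assumes k: "k \<ge> 2" and nk: "2 * k < n" and F: "intersecting F"
    and allk: "\<forall>p. p permutes {..<n} \<longrightarrow> card (starts n k F p) = k"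
    and x: "x < n" and Y: "Y \<subseteq> {..<n}" "card Y = k - 1" "x \<notin> Y" "insert x Y \<in> F"
    and M: "M \<in> F" "M \<inter> Y = {}"
    and z: "z < n" "z \<notin> Y" "z \<noteq> x" "z \<notin> M"
    and X: "X \<subseteq> {..<n}" "card X = k - 1" "X \<inter> Y = {}" "x \<notin> X" "z \<notin> X"
  shows "insert x X \<in> F"
proof -
  have finX: "finite X" using X(1) finite_subset by blast
  have finY: "finite Y" using Y(1) finite_subset by blast
  obtain fX where fX: "bij_betw fX {1..<k} X"
    using finite_same_card_bij[of "{1..<k}" X] finX X(2) by auto
  obtain fY where fY: "bij_betw fY {n-k+1..<n} Y"
    using finite_same_card_bij[of "{n-k+1..<n}" Y] finY Y(2) k nk by auto
  define f where "f i = (if i = 0 then x else if i = n - k then z else if i < k then fX i else fY i)" for i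
  define D where "D = {..<k} \<union> {n-k..<n}"
  have D_eq: "D = {0} \<union> {1..<k} \<union> {n-k} \<union> {n-k+1..<n}" unfolding D_def using k nk by auto
  have im1: "f ` {1..<k} = X"
  proof -
    have "f ` {1..<k} = fX ` {1..<k}" by (rule image_cong) (use nk in \<open>auto simp: f_def\<close>)
    then show ?thesis using fX by (simp add: bij_betw_def)
  qed
  have im3: "f ` {n-k+1..<n} = Y"
  proof -
    have "f ` {n-k+1..<n} = fY ` {n-k+1..<n}" by (rule image_cong) (use nk in \<open>auto simp: f_def\<close>)
    then show ?thesis using fY by (simp add: bij_betw_def)
  qed
  have f0: "f 0 = x" and fz: "f (n - k) = z" using nk by (auto simp: f_def)
  define T where "T = insert x (insert z (X \<union> Y))"
  have imD: "f ` D = T" unfolding D_eq T_def using im1 im3 f0 fz by auto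
  have cD: "card D = 2 * k" unfolding D_def using nk by (subst card_Un_disjoint) auto
  have cT: "card T = 2 * k" unfolding T_def using X Y z finX finY k
    by (simp add: card_Un_disjoint)
  have "card (f ` D) = card D" using imD cD cT by simp
  then have "inj_on f D" by (intro eq_card_imp_inj_on) (auto simp: D_def)
  then have bij: "bij_betw f D T" using imD by (simp add: bij_betw_def)
  have TU: "T \<subseteq> {..<n}" unfolding T_def using x z X Y by auto
  have DU: "D \<subseteq> {..<n}" unfolding D_def using nk by auto
  obtain q where q: "q permutes {..<n}" "\<forall>i\<in>D. q i = f i"
    using perm_extend[OF _ DU TU bij] by auto
  have qim: "q ` S = f ` S" if "S \<subseteq> D" for S
    by (rule image_cong[OF refl]) (use q(2) that in auto)
  have kn: "k \<le> n" using nk by simp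
  have p1: "pos n k (n - k + 1) = {n-k+1..<n} \<union> {0}"
  proof -
    have c1: "\<not> (n - k + 1 + k \<le> n)" using nk by simp
    have l1: "n - k + 1 < n" using k nk by simp
    have "pos n k (n - k + 1) = {n-k+1..<n} \<union> {..<n - k + 1 + k - n}"
      using pos_eq[OF l1 kn] c1 by (simp only: if_False)
    moreover have "n - k + 1 + k - n = 1" using nk by simp
    ultimately show ?thesis by (simp add: lessThan_Suc)
  qed
  have p2: "pos n k (n - k) = {n-k} \<union> {n-k+1..<n}"
  proof -
    have c1: "n - k + k \<le> n" using nk by simp
    have l1: "n - k < n" using k nk by simp
    have "pos n k (n - k) = {n-k..<n - k + k}"
      using pos_eq[OF l1 kn] c1 by (simp only: if_True)
    moreover have "n - k + k = n" using nk by simp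
    moreover have "{n-k..<n} = {n-k} \<union> {n-k+1..<n}" using k nk by (auto simp: atLeastLessThan_def)
    ultimately show ?thesis by simp
  qed
  have p3: "pos n k 0 = {0} \<union> {1..<k}"
  proof -
    have c1: "0 + k \<le> n" using nk by simp
    have l1: "0 < n" using k nk by simp
    have "pos n k 0 = {0..<0 + k}"
      using pos_eq[OF l1 kn] c1 by (simp only: if_True)
    moreover have "{0..<k} = {0} \<union> {1..<k}" using k by auto
    ultimately show ?thesis by simp
  qed
  have "0 \<in> D" "n - k \<in> D" unfolding D_def using k nk by auto
  then have q0: "q 0 = x" and qz: "q (n - k) = z" using q(2) f0 fz by auto
  have "{1..<k} \<subseteq> D" "{n-k+1..<n} \<subseteq> D" unfolding D_def by auto
  then have qX: "q ` {1..<k} = X" and qY: "q ` {n-k+1..<n} = Y" using qim im1 im3 by auto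
  have a1: "arc n k q (n - k + 1) = insert x Y"
    unfolding arc_def p1 image_Un qY using q0 by auto
  have a2: "arc n k q (n - k) = insert z Y"
    unfolding arc_def p2 image_Un qY using qz by auto
  have a3: "arc n k q 0 = insert x X"
    unfolding arc_def p3 image_Un qX using q0 by auto
  have s1: "n - k + 1 \<in> starts n k F q" using a1 Y(4) k nk by (auto simp: starts_def)
  have s2: "n - k \<notin> starts n k F q"
  proof
    assume "n - k \<in> starts n k F q"
    then have "insert z Y \<in> F" using a2 by (auto simp: starts_def)
    moreover have "M \<inter> insert z Y = {}" using M z by auto
    ultimately show False using F M(1) unfolding intersecting_def by blast
  qed
  have "wrap n (n - k + 1 + (k - 1)) \<in> starts n k F q \<or> wrap n (n - k + 1 + (k - 1) + n - k) \<in> starts n k F q"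
    using starts_choice[OF q(1) F _ _ allk[rule_format, OF q(1)] s1, of "k - 1"] k nk by auto
  moreover have "wrap n (n - k + 1 + (k - 1)) = 0" using k nk by (simp add: wrap_def)
  moreover have "wrap n (n - k + 1 + (k - 1) + n - k) = n - k" using k nk by (simp add: wrap_def)
  ultimately have "0 \<in> starts n k F q" using s2 by auto
  then show ?thesis using a3 by (simp add: starts_def)
qed

definition good :: "nat \<Rightarrow> nat \<Rightarrow> nat set set \<Rightarrow> nat \<Rightarrow> nat set \<Rightarrow> bool" where
  "good n k F x Y \<longleftrightarrow> Y \<subseteq> {..<n} \<and> card Y = k - 1 \<and> x \<notin> Y \<and> insert x Y \<in> F"

lemma lemB:
  assumes k: "k \<ge> 2" and nk: "2 * k < n" and F: "intersecting F"
    and allk: "\<forall>p. p permutes {..<n} \<longrightarrow> card (starts n k F p) = k"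
    and x: "x < n" and Y: "good n k F x Y" and W: "good n k F x W" "W \<inter> Y = {}"
    and X: "X \<subseteq> {..<n}" "card X = k - 1" "x \<notin> X" "X \<inter> Y = {}"
  shows "good n k F x X"
proof -
  define U where "U = {..<n} - insert x Y"
  have finU: "finite U" unfolding U_def by simp
  have Ysub: "Y \<subseteq> {..<n}" "card Y = k - 1" "x \<notin> Y" "insert x Y \<in> F" using Y by (auto simp: good_def)
  have Wsub: "W \<subseteq> {..<n}" "card W = k - 1" "x \<notin> W" "insert x W \<in> F" using W by (auto simp: good_def)
  have finY: "finite Y" using Ysub(1) by (rule finite_subset) simp
  have cU: "card U = n - k"
  proof -
    have "card (insert x Y) = k" using Ysub finY k by simp
    moreover have "insert x Y \<subseteq> {..<n}" using Ysub x by blast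
    moreover have "finite (insert x Y)" using finY by blast
    ultimately show ?thesis unfolding U_def by (simp add: card_Diff_subset)
  qed
  have XU: "X \<subseteq> U" using X unfolding U_def by auto
  have WU: "W \<subseteq> U" using Wsub W(2) unfolding U_def by auto
  have "card (U - X) > 0"
    using card_Diff_subset[OF finite_subset[OF XU finU] XU] cU X(2) nk by simp
  then have "U - X \<noteq> {}" by (metis card.empty less_irrefl)
  then obtain z where z: "z \<in> U" "z \<notin> X" by blast
  have zz: "z < n" "z \<notin> Y" "z \<noteq> x" using z unfolding U_def by auto
  have MY: "insert x W \<inter> Y = {}" using Ysub(3) W(2) by blast
  show ?thesis
  proof (cases "z \<in> W")
    case False
    have zM: "z \<notin> insert x W" using zz(3) False by blast
    have "insert x X \<in> F"
      using lemA[OF k nk F allk x Ysub(1-4) Wsub(4) MY zz zM X(1,2,4,3) z(2)] .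
    then show ?thesis using X by (simp add: good_def)
  next
    case True
    have "card (U - W) > 0"
      using card_Diff_subset[OF finite_subset[OF WU finU] WU] cU Wsub(2) nk by simp
    then have "U - W \<noteq> {}" by (metis card.empty less_irrefl)
    then obtain z1 where z1: "z1 \<in> U" "z1 \<notin> W" by blast
    have zz1: "z1 < n" "z1 \<notin> Y" "z1 \<noteq> x" "z1 \<noteq> z" using z1 True unfolding U_def by auto
    have "card (U - {z1, z}) = n - k - 2"
    proof -
      have "card {z1, z} = 2" using zz1(4) by simp
      moreover have "{z1, z} \<subseteq> U" using z(1) z1(1) by blast
      ultimately show ?thesis using card_Diff_subset[of "{z1, z}" U] cU by simp
    qed
    then have "k - 1 \<le> card (U - {z1, z})" using nk by simp
    then obtain W' where W': "W' \<subseteq> U - {z1, z}" "card W' = k - 1" "finite W'"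
      by (rule obtain_subset_with_card_n)
    have z1M: "z1 \<notin> insert x W" using zz1(3) z1(2) by blast
    have W's: "W' \<subseteq> {..<n}" "W' \<inter> Y = {}" "x \<notin> W'" "z1 \<notin> W'" "z \<notin> W'"
      using W'(1) unfolding U_def by blast+
    have W'F: "insert x W' \<in> F"
      using lemA[OF k nk F allk x Ysub(1-4) Wsub(4) MY zz1(1-3) z1M W's(1) W'(2) W's(2,3,4)] .
    have MY': "insert x W' \<inter> Y = {}" using Ysub(3) W's(2) by blast
    have zM': "z \<notin> insert x W'" using zz(3) W's(5) by blast
    have "insert x X \<in> F"
      using lemA[OF k nk F allk x Ysub(1-4) W'F MY' zz zM' X(1,2,4,3) z(2)] .
    then show ?thesis using X by (simp add: good_def)
  qed
qed

definition goodQ :: "nat \<Rightarrow> nat \<Rightarrow> nat set set \<Rightarrow> nat \<Rightarrow> nat set \<Rightarrow> bool" where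
  "goodQ n k F x Y \<longleftrightarrow> good n k F x Y \<and> (\<exists>W. good n k F x W \<and> W \<inter> Y = {})"

lemma lemQ:
  assumes k: "k \<ge> 2" and nk: "2 * k < n" and F: "intersecting F"
    and allk: "\<forall>p. p permutes {..<n} \<longrightarrow> card (starts n k F p) = k"
    and x: "x < n" and Y: "goodQ n k F x Y"
    and X: "X \<subseteq> {..<n}" "card X = k - 1" "x \<notin> X" "X \<inter> Y = {}"
  shows "goodQ n k F x X"
proof -
  obtain W where "good n k F x W" "W \<inter> Y = {}" using Y by (auto simp: goodQ_def)
  then have "good n k F x X" using lemB[OF k nk F allk x _ _ _ X] Y by (auto simp: goodQ_def)
  moreover have "good n k F x Y" using Y by (simp add: goodQ_def)
  ultimately show ?thesis using X(4) by (auto simp: goodQ_def)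
qed

lemma exchange:
  assumes k: "k \<ge> 2" and nk: "2 * k < n" and F: "intersecting F"
    and allk: "\<forall>p. p permutes {..<n} \<longrightarrow> card (starts n k F p) = k"
    and x: "x < n" and Y: "goodQ n k F x Y" and a: "a \<in> Y" and b: "b < n" "b \<notin> Y" "b \<noteq> x"
  shows "goodQ n k F x (insert b (Y - {a}))"
proof -
  have Ys: "Y \<subseteq> {..<n}" "card Y = k - 1" "x \<notin> Y" using Y by (auto simp: goodQ_def good_def)
  have finY: "finite Y" using Ys(1) by (rule finite_subset) simp
  have "card ({..<n} - insert x (insert b Y)) = n - (k + 1)"
  proof -
    have "card (insert x (insert b Y)) = k + 1" using Ys b finY k by simp
    moreover have "insert x (insert b Y) \<subseteq> {..<n}" using Ys x b by blast
    moreover have "finite (insert x (insert b Y))" using finY by blast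
    ultimately show ?thesis by (simp add: card_Diff_subset)
  qed
  then have "k - 1 \<le> card ({..<n} - insert x (insert b Y))" using nk by simp
  then obtain C where C: "C \<subseteq> {..<n} - insert x (insert b Y)" "card C = k - 1" "finite C"
    by (rule obtain_subset_with_card_n)
  have C1: "C \<subseteq> {..<n}" "x \<notin> C" "C \<inter> Y = {}" "b \<notin> C" using C(1) by blast+
  have QC: "goodQ n k F x C" using lemQ[OF k nk F allk x Y C1(1) C(2) C1(2,3)] .
  show ?thesis
  proof (rule lemQ[OF k nk F allk x QC])
    show "insert b (Y - {a}) \<subseteq> {..<n}" using Ys b by auto
    show "card (insert b (Y - {a})) = k - 1" using Ys a b finY k by simp
    show "x \<notin> insert b (Y - {a})" using Ys b by auto
    show "insert b (Y - {a}) \<inter> C = {}" using C1 by blast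
  qed
qed

lemma reach:
  assumes k: "k \<ge> 2" and nk: "2 * k < n" and F: "intersecting F"
    and allk: "\<forall>p. p permutes {..<n} \<longrightarrow> card (starts n k F p) = k"
    and x: "x < n"
    and T: "T \<subseteq> {..<n}" "card T = k - 1" "x \<notin> T"
  shows "goodQ n k F x Y \<Longrightarrow> goodQ n k F x T"
proof (induction "card (Y - T)" arbitrary: Y)
  case 0
  have Ys: "Y \<subseteq> {..<n}" "card Y = k - 1" using 0 by (auto simp: goodQ_def good_def)
  have finT: "finite T" using T(1) by (rule finite_subset) simp
  have finY: "finite Y" using Ys(1) by (rule finite_subset) simp
  have "card (Y - T) = 0" using 0 by simp
  then have "Y - T = {}" using finY by simp
  then have "Y \<subseteq> T" by auto
  then have "Y = T" using card_subset_eq[OF finT] Ys T by simp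
  then show ?case using 0 by simp
next
  case (Suc m)
  have Ys: "Y \<subseteq> {..<n}" "card Y = k - 1" using Suc.prems by (auto simp: goodQ_def good_def)
  have finY: "finite Y" using Ys(1) by (rule finite_subset) simp
  have finT: "finite T" using T(1) by (rule finite_subset) simp
  have "Y - T \<noteq> {}"
  proof
    assume e: "Y - T = {}"
    have "card (Y - T) = 0" unfolding e by simp
    then show False using Suc.hyps(2) by linarith
  qed
  then obtain a where a: "a \<in> Y" "a \<notin> T" by blast
  have "\<not> T \<subseteq> Y"
  proof
    assume "T \<subseteq> Y"
    then have "T = Y" using card_subset_eq[OF finY] Ys T by simp
    then show False using a by simp
  qed
  then obtain b where b: "b \<in> T" "b \<notin> Y" by blast
  have bb: "b < n" "b \<noteq> x" using b T by auto
  define Y' where "Y' = insert b (Y - {a})"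
  have Q': "goodQ n k F x Y'" unfolding Y'_def
    by (rule exchange[OF k nk F allk x Suc.prems a(1) bb(1) b(2) bb(2)])
  have "Y' - T = (Y - T) - {a}" unfolding Y'_def using b by auto
  then have "m = card (Y' - T)" using Suc.hyps(2) a finY by simp
  then show ?case using Suc.hyps(1) Q' by blast
qed

lemma pos_nowrap:
  assumes "s + k \<le> n" "k \<ge> 1"
  shows "pos n k s = {s..<s+k}"
proof -
  have "s < n" "k \<le> n" using assms by arith+
  show ?thesis unfolding pos_eq[OF \<open>s < n\<close> \<open>k \<le> n\<close>] if_P[OF assms(1)] ..
qed

lemma pos_wrapped:
  assumes "s < n" "k \<le> n" "n < s + k"
  shows "pos n k s = {s..<n} \<union> {..<s+k-n}"
proof -
  have c: "\<not> s + k \<le> n" using assms by arith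
  show ?thesis unfolding pos_eq[OF assms(1,2)] if_not_P[OF c] ..
qed

lemma pairlem:
  assumes q: "q permutes {..<n}" and kn: "k \<le> n" and k: "k \<ge> 1"
    and s1: "s1 \<in> starts n k F q" and s2: "s2 \<in> starts n k F q"
    and m: "pos n k s1 \<inter> pos n k s2 = {m}"
  shows "\<exists>x<n. \<exists>Y W. good n k F x Y \<and> good n k F x W \<and> W \<inter> Y = {}"
proof -
  have sn: "s1 < n" "s2 < n" using s1 s2 by (auto simp: starts_def)
  have inj: "inj q" using q by (rule permutes_inj)
  have m1: "m \<in> pos n k s1" "m \<in> pos n k s2" using m by auto
  have mn: "m < n" using m1 pos_sub[OF sn(1) kn] by auto
  define x where "x = q m"
  have xn: "x < n" unfolding x_def using permutes_in_image[OF q] mn by simp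
  have gd: "good n k F x (q ` (pos n k s - {m}))" if s: "s \<in> starts n k F q" "m \<in> pos n k s" for s
  proof -
    have sn: "s < n" using s by (auto simp: starts_def)
    have "insert x (q ` (pos n k s - {m})) = q ` pos n k s" unfolding x_def using s(2) by auto
    also have "\<dots> \<in> F" using s(1) by (simp add: starts_def arc_def)
    finally have A: "insert x (q ` (pos n k s - {m})) \<in> F" .
    have fp: "finite (pos n k s)" by (simp add: pos_def)
    have cd: "card (pos n k s - {m}) = k - 1" using card_pos[OF sn kn] fp s(2) by simp
    have ij: "inj_on q (pos n k s - {m})" using inj_on_subset[OF inj subset_UNIV] .
    have B: "card (q ` (pos n k s - {m})) = k - 1" using card_image[OF ij] cd by simp
    have C: "x \<notin> q ` (pos n k s - {m})" unfolding x_def using inj by (auto dest: injD)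
    have D: "q ` (pos n k s - {m}) \<subseteq> {..<n}"
      using pos_sub[OF sn kn] permutes_in_image[OF q] by auto
    show ?thesis using A B C D by (simp add: good_def)
  qed
  have "q ` (pos n k s2 - {m}) \<inter> q ` (pos n k s1 - {m}) = q ` ((pos n k s2 - {m}) \<inter> (pos n k s1 - {m}))"
    using inj by (simp add: image_Int)
  also have "\<dots> = {}" using m by blast
  finally have DJ: "q ` (pos n k s2 - {m}) \<inter> q ` (pos n k s1 - {m}) = {}" .
  show ?thesis using gd[OF s1 m1(1)] gd[OF s2 m1(2)] xn DJ by blast
qed

lemma init_pair:
  assumes k: "k \<ge> 2" and nk: "2 * k < n" and F: "intersecting F"
    and allk: "\<forall>p. p permutes {..<n} \<longrightarrow> card (starts n k F p) = k"
    and A: "A \<in> F" and FK: "F \<subseteq> kneser_vertices n k"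
  shows "\<exists>x<n. \<exists>Y W. good n k F x Y \<and> good n k F x W \<and> W \<inter> Y = {}"
proof -
  have kn: "k \<le> n" using nk by simp
  have AK: "A \<subseteq> {..<n}" "card A = k" using A FK by (auto simp: kneser_vertices_def)
  obtain q where q: "q permutes {..<n}" "q ` {..<k} = A"
    using perm_map_set[of "{..<n}" "{..<k}" A] AK kn by auto
  have p0: "pos n k 0 = {..<k}" using pos_nowrap[of 0 k n] nk k by (simp add: atLeast0LessThan)
  have s0: "0 \<in> starts n k F q" using q(2) A nk by (simp add: starts_def arc_def p0)
  have ck: "card (starts n k F q) = k" using allk q(1) by blast
  define I where "I = {i. i < k \<and> i \<in> starts n k F q}"
  have finI: "finite I" unfolding I_def by simp
  have I0: "0 \<in> I" unfolding I_def using s0 k by simp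
  define t where "t = Max I"
  have tI: "t \<in> I" unfolding t_def using finI I0 Max_in by blast
  then have tk: "t < k" and ts: "t \<in> starts n k F q" unfolding I_def by auto
  show ?thesis
  proof (cases "t = k - 1")
    case True
    have sk: "k - 1 \<in> starts n k F q" using ts True by simp
    have pk: "pos n k (k - 1) = {k-1..<k-1+k}" using pos_nowrap[of "k - 1" k n] nk k by simp
    have "pos n k 0 \<inter> pos n k (k - 1) = {k - 1}" unfolding p0 pk using k by auto
    then show ?thesis using pairlem[OF q(1) kn _ s0 sk] k by auto
  next
    case False
    then have t1: "t + 1 < k" using tk by simp
    have "t + 1 \<notin> starts n k F q"
    proof
      assume "t + 1 \<in> starts n k F q"
      then have "t + 1 \<in> I" unfolding I_def using t1 by simp
      then have "t + 1 \<le> t" unfolding t_def using finI by (simp add: Max_ge)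
      then show False by simp
    qed
    moreover have "wrap n (0 + (t + 1)) = t + 1" using t1 nk by (simp add: wrap_def)
    moreover have "wrap n (0 + (t + 1) + n - k) = t + 1 + n - k" using t1 nk by (simp add: wrap_def)
    ultimately have s2: "t + 1 + n - k \<in> starts n k F q"
      using starts_choice[OF q(1) F _ _ ck s0 t1] nk k by auto
    have pt: "pos n k t = {t..<t+k}" using pos_nowrap[of t k n] nk t1 by simp
    have pt2: "pos n k (t + 1 + n - k) = {t+1+n-k..<n} \<union> {..<t+1+n-k+k-n}"
      using pos_wrapped[of "t + 1 + n - k" n k] nk t1 by simp
    have e: "t+1+n-k+k-n = t + 1" using nk t1 by simp
    have "pos n k t \<inter> pos n k (t + 1 + n - k) = {t}" unfolding pt pt2 e using nk t1 by auto
    then show ?thesis using pairlem[OF q(1) kn _ ts s2] k by auto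
  qed
qed

lemma card_star:
  assumes U: "finite U" and x: "x \<in> U" and k: "k \<ge> 1"
  shows "card {A. A \<subseteq> U \<and> card A = k \<and> x \<in> A} = (card U - 1) choose (k - 1)"
proof -
  have "{A. A \<subseteq> U \<and> card A = k \<and> x \<in> A} = insert x ` {B. B \<subseteq> U - {x} \<and> card B = k - 1}"
  proof
    show "{A. A \<subseteq> U \<and> card A = k \<and> x \<in> A} \<subseteq> insert x ` {B. B \<subseteq> U - {x} \<and> card B = k - 1}"
    proof
      fix A assume A: "A \<in> {A. A \<subseteq> U \<and> card A = k \<and> x \<in> A}"
      have "A = insert x (A - {x})" using A by auto
      moreover have "A - {x} \<in> {B. B \<subseteq> U - {x} \<and> card B = k - 1}"
        using A U by (auto simp: finite_subset)
      ultimately show "A \<in> insert x ` {B. B \<subseteq> U - {x} \<and> card B = k - 1}" by blast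
    qed
    show "insert x ` {B. B \<subseteq> U - {x} \<and> card B = k - 1} \<subseteq> {A. A \<subseteq> U \<and> card A = k \<and> x \<in> A}"
    proof
      fix A assume "A \<in> insert x ` {B. B \<subseteq> U - {x} \<and> card B = k - 1}"
      then obtain B where B: "B \<subseteq> U - {x}" "card B = k - 1" "A = insert x B" by auto
      have "finite B" using B(1) U by (rule finite_subset[OF subset_trans[OF _ Diff_subset]])
      moreover have "x \<notin> B" using B(1) by blast
      ultimately have "card A = k" using B k by simp
      then show "A \<in> {A. A \<subseteq> U \<and> card A = k \<and> x \<in> A}" using B x by auto
    qed
  qed
  moreover have "inj_on (insert x) {B. B \<subseteq> U - {x} \<and> card B = k - 1}"
    by (rule inj_onI) (metis Diff_insert_absorb mem_Collect_eq subset_Diff_insert)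
  ultimately have "card {A. A \<subseteq> U \<and> card A = k \<and> x \<in> A} = card {B. B \<subseteq> U - {x} \<and> card B = k - 1}"
    by (simp add: card_image)
  also have "\<dots> = card (U - {x}) choose (k - 1)" using n_subsets U by blast
  also have "\<dots> = (card U - 1) choose (k - 1)" using U x by simp
  finally show ?thesis .
qed

lemma card_star_kv:
  assumes "x < n" "k \<ge> 1"
  shows "card {A \<in> kneser_vertices n k. x \<in> A} = (n - 1) choose (k - 1)"
  using card_star[of "{..<n}" x k] assms by (simp add: kneser_vertices_def conj_assoc)

lemma ekr_unique:
  assumes k: "k \<ge> 2" and nk: "2 * k < n" and FK: "F \<subseteq> kneser_vertices n k" and F: "intersecting F"
    and c: "card F = (n - 1) choose (k - 1)"
  shows "\<exists>x<n. F = {A \<in> kneser_vertices n k. x \<in> A}"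
proof -
  have allk: "\<forall>p. p permutes {..<n} \<longrightarrow> card (starts n k F p) = k"
    using ekr[of k n F] assms by auto
  have "F \<noteq> {}" using c nk k by auto
  then obtain A where A: "A \<in> F" by blast
  obtain x Y W where x: "x < n" and Y: "good n k F x Y" and W: "good n k F x W" "W \<inter> Y = {}"
    using init_pair[OF k nk F allk A FK] by blast
  have QY: "goodQ n k F x Y" using Y W by (auto simp: goodQ_def)
  have sub: "{A \<in> kneser_vertices n k. x \<in> A} \<subseteq> F"
  proof
    fix B assume B: "B \<in> {A \<in> kneser_vertices n k. x \<in> A}"
    have "finite B" using B by (auto simp: kneser_vertices_def finite_subset)
    then have "goodQ n k F x (B - {x})"
      using reach[OF k nk F allk x, of "B - {x}" Y] QY B by (auto simp: kneser_vertices_def)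
    then have "insert x (B - {x}) \<in> F" by (simp add: goodQ_def good_def)
    then show "B \<in> F" using B by (simp add: insert_absorb)
  qed
  have finF: "finite F" using FK finite_kv by (rule finite_subset)
  have "{A \<in> kneser_vertices n k. x \<in> A} = F"
    using card_subset_eq[OF finF sub] card_star_kv[OF x] k c by simp
  then show ?thesis using x by blast
qed

lemma indep_kv:
  "indep_set (kneser_vertices n k) kneser_adj S \<longleftrightarrow> S \<subseteq> kneser_vertices n k \<and> intersecting S"
  unfolding indep_set_def intersecting_def kneser_adj_def by blast

lemma star_indep:
  assumes "k \<ge> 1"
  shows "indep_set (kneser_vertices n k) kneser_adj {A \<in> kneser_vertices n k. x \<in> A}"
  unfolding indep_kv intersecting_def by blast

lemma finite_indeps: "finite {S. indep_set (kneser_vertices n k) kneser_adj S}"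
proof -
  have "{S. indep_set (kneser_vertices n k) kneser_adj S} \<subseteq> Pow (kneser_vertices n k)"
    by (auto simp: indep_set_def)
  then show ?thesis using finite_kv by (rule finite_subset[OF _ finite_Pow_iff[THEN iffD2]])
qed

lemma finite_oddindeps: "finite {S. odd_indep_set (kneser_vertices n k) kneser_adj S}"
proof -
  have "{S. odd_indep_set (kneser_vertices n k) kneser_adj S} \<subseteq> {S. indep_set (kneser_vertices n k) kneser_adj S}"
    by (auto simp: odd_indep_set_def)
  then show ?thesis using finite_indeps by (rule finite_subset)
qed

lemma indep_card_le:
  assumes k: "k \<ge> 1" and nk: "2 * k \<le> n" and S: "indep_set (kneser_vertices n k) kneser_adj S"
  shows "card S \<le> (n - 1) choose (k - 1)"
  using ekr[OF k nk] S unfolding indep_kv by blast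

lemma alpha_val:
  assumes k: "k \<ge> 1" and nk: "2 * k \<le> n"
  shows "alpha (kneser_vertices n k) kneser_adj = (n - 1) choose (k - 1)"
  unfolding alpha_def
proof (rule Max_eqI)
  show "finite (card ` {S. indep_set (kneser_vertices n k) kneser_adj S})"
    using finite_indeps by simp
  show "y \<le> (n - 1) choose (k - 1)" if "y \<in> card ` {S. indep_set (kneser_vertices n k) kneser_adj S}" for y
    using that indep_card_le[OF k nk] by auto
  have "card {A \<in> kneser_vertices n k. 0 \<in> A} = (n - 1) choose (k - 1)"
    using card_star_kv[of 0 n k] k nk by simp
  then show "(n - 1) choose (k - 1) \<in> card ` {S. indep_set (kneser_vertices n k) kneser_adj S}"
    using star_indep[OF k, of n 0] by (metis (mono_tags, lifting) image_eqI mem_Collect_eq)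
qed

lemma star_nbrs:
  assumes x: "x < n" and v: "v \<in> kneser_vertices n k" "x \<notin> v" and k: "k \<ge> 1"
  shows "card {u \<in> {A \<in> kneser_vertices n k. x \<in> A}. kneser_adj v u} = (n - k - 1) choose (k - 1)"
proof -
  have vs: "v \<subseteq> {..<n}" "card v = k" using v by (auto simp: kneser_vertices_def)
  have "{u \<in> {A \<in> kneser_vertices n k. x \<in> A}. kneser_adj v u} = {A. A \<subseteq> {..<n} - v \<and> card A = k \<and> x \<in> A}"
    by (auto simp: kneser_vertices_def kneser_adj_def)
  moreover have "card ({..<n} - v) = n - k"
    using vs by (simp add: card_Diff_subset finite_subset)
  moreover have "x \<in> {..<n} - v" using x v by simp
  ultimately show ?thesis using card_star[of "{..<n} - v" x k] k by simp
qed

lemma star_odd: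
  assumes k: "k \<ge> 1" and x: "x < n" and o: "odd ((n - k - 1) choose (k - 1))"
  shows "odd_indep_set (kneser_vertices n k) kneser_adj {A \<in> kneser_vertices n k. x \<in> A}"
  unfolding odd_indep_set_def
proof (intro conjI ballI)
  show "indep_set (kneser_vertices n k) kneser_adj {A \<in> kneser_vertices n k. x \<in> A}"
    using star_indep[OF k] .
  fix v assume "v \<in> kneser_vertices n k - {A \<in> kneser_vertices n k. x \<in> A}"
  then have "v \<in> kneser_vertices n k" "x \<notin> v" by auto
  then show "card {u \<in> {A \<in> kneser_vertices n k. x \<in> A}. kneser_adj v u} = 0 \<or>
             odd (card {u \<in> {A \<in> kneser_vertices n k. x \<in> A}. kneser_adj v u})"
    using star_nbrs[OF x _ _ k] o by simp
qed

lemma sum_identity: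
  fixes n k :: nat
  assumes k: "k \<ge> 2" and nk: "n \<ge> 2 * k"
  shows "(n - 1) choose (k - 1) = ((n - k - 1) choose (k - 1)) +
     (\<Sum>t=1..k. (k choose t) * (if t \<le> k - 1 then (n - k - 1) choose (k - 1 - t) else 0))"
proof -
  define h where "h t = (k choose t) * ((n - k - 1) choose (k - 1 - t))" for t
  have e1: "(n - 1) choose (k - 1) = (\<Sum>t\<le>k-1. h t)"
    using vandermonde[of k "n - k - 1" "k - 1"] nk k unfolding h_def by simp
  have ins: "{..k-1} = insert 0 {1..k-1}" by auto
  have e2: "(\<Sum>t\<le>k-1. h t) = h 0 + (\<Sum>t=1..k-1. h t)" unfolding ins by simp
  have e4: "h 0 = (n - k - 1) choose (k - 1)" unfolding h_def by simp
  have ins2: "{1..k} = insert k {1..k-1}" using k by auto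
  have e3: "(\<Sum>t=1..k. (k choose t) * (if t \<le> k - 1 then (n - k - 1) choose (k - 1 - t) else 0))
        = (\<Sum>t=1..k-1. (k choose t) * (if t \<le> k - 1 then (n - k - 1) choose (k - 1 - t) else 0))"
    unfolding ins2 using k by simp
  have e5: "(\<Sum>t=1..k-1. (k choose t) * (if t \<le> k - 1 then (n - k - 1) choose (k - 1 - t) else 0))
        = (\<Sum>t=1..k-1. h t)" unfolding h_def by (intro sum.cong refl) simp
  show ?thesis unfolding e1 e2 e3 e4 e5 ..
qed

theorem theorem2:
  fixes n k :: nat
  assumes "k \<ge> 2" and "n \<ge> 2 * k"
  shows "(alpha_od (kneser_vertices n k) kneser_adj = alpha (kneser_vertices n k) kneser_adj
            \<longleftrightarrow> odd ((n - k - 1) choose (k - 1)))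
       \<and> (alpha_od (kneser_vertices n k) kneser_adj = alpha (kneser_vertices n k) kneser_adj
            \<longleftrightarrow> ((n - 1) choose (k - 1)) mod 2 \<noteq>
                 (\<Sum>t=1..k. (k choose t) * (if t \<le> k - 1 then (n - k - 1) choose (k - 1 - t) else 0)) mod 2)"
proof -
  have k: "k \<ge> 1" and k2: "k \<ge> 2" and nk: "2 * k \<le> n" using assms by auto
  define V where "V = kneser_vertices n k"
  define C where "C = (n - 1) choose (k - 1)"
  define OS where "OS = card ` {S. odd_indep_set V kneser_adj S}"
  have aV: "alpha V kneser_adj = C" unfolding V_def C_def by (rule alpha_val[OF k nk])
  have finOS: "finite OS" unfolding OS_def V_def using finite_oddindeps by simp
  have OSle: "y \<le> C" if "y \<in> OS" for y
    using that indep_card_le[OF k nk] unfolding OS_def V_def C_def odd_indep_set_def by auto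
  have OSne: "0 \<in> OS"
  proof -
    have "odd_indep_set V kneser_adj {}" by (auto simp: odd_indep_set_def indep_set_def)
    then show ?thesis unfolding OS_def by force
  qed
  have part1: "alpha_od V kneser_adj = alpha V kneser_adj \<longleftrightarrow> odd ((n - k - 1) choose (k - 1))"
  proof
    assume o: "odd ((n - k - 1) choose (k - 1))"
    have "0 < n" using nk k by simp
    then have so: "odd_indep_set V kneser_adj {A \<in> V. 0 \<in> A}"
      unfolding V_def using star_odd[OF k _ o] by blast
    have "card {A \<in> V. 0 \<in> A} = C" unfolding V_def C_def using card_star_kv[of 0 n k] k nk by simp
    then have "C \<in> OS" using so unfolding OS_def by force
    then have "Max OS = C" using Max_eqI[OF finOS OSle] by blast
    then show "alpha_od V kneser_adj = alpha V kneser_adj" unfolding alpha_od_def aV OS_def .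
  next
    assume eq: "alpha_od V kneser_adj = alpha V kneser_adj"
    have "Max OS \<in> OS" using Max_in[OF finOS] OSne by blast
    then obtain S where S: "odd_indep_set V kneser_adj S" "card S = C"
      using eq aV unfolding alpha_od_def OS_def by auto
    show "odd ((n - k - 1) choose (k - 1))"
    proof (cases "n = 2 * k")
      case True
      then have "n - k - 1 = k - 1" by simp
      then show ?thesis by simp
    next
      case False
      then have nk2: "2 * k < n" using nk by simp
      have SI: "S \<subseteq> kneser_vertices n k" "intersecting S"
        using S(1) unfolding odd_indep_set_def V_def indep_kv by auto
      obtain x where x: "x < n" "S = {A \<in> kneser_vertices n k. x \<in> A}"
        using ekr_unique[OF k2 nk2 SI S(2)[unfolded C_def]] by blast
      have "k \<le> card ({..<n} - {x})" using x nk2 by simp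
      then obtain v where v: "v \<subseteq> {..<n} - {x}" "card v = k" "finite v"
        by (rule obtain_subset_with_card_n)
      have vV: "v \<in> kneser_vertices n k" "x \<notin> v" using v by (auto simp: kneser_vertices_def)
      then have "v \<in> V - S" using x unfolding V_def by auto
      then have "card {u \<in> S. kneser_adj v u} = 0 \<or> odd (card {u \<in> S. kneser_adj v u})"
        using S(1) unfolding odd_indep_set_def by blast
      moreover have "card {u \<in> S. kneser_adj v u} = (n - k - 1) choose (k - 1)"
        unfolding x(2) using star_nbrs[OF x(1) vV k] .
      moreover have "(n - k - 1) choose (k - 1) > 0" using nk by simp
      ultimately show ?thesis by auto
    qed
  qed
  have part2: "odd ((n - k - 1) choose (k - 1)) \<longleftrightarrow> ((n - 1) choose (k - 1)) mod 2 \<noteq>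
                 (\<Sum>t=1..k. (k choose t) * (if t \<le> k - 1 then (n - k - 1) choose (k - 1 - t) else 0)) mod 2"
  proof -
    define A where "A = (n - k - 1) choose (k - 1)"
    define B where "B = (\<Sum>t=1..k. (k choose t) * (if t \<le> k - 1 then (n - k - 1) choose (k - 1 - t) else 0))"
    have "(n - 1) choose (k - 1) = A + B" unfolding A_def B_def by (rule sum_identity[OF k2 assms(2)])
    moreover have "odd A \<longleftrightarrow> (A + B) mod 2 \<noteq> B mod 2" by presburger
    ultimately show ?thesis unfolding A_def B_def by simp
  qed
  show ?thesis using part1 part2 unfolding V_def by simp
qed

end
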